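(* Let $G$ be a finite simple graph and $\mathcal{N}G$ its normal graph algebra over a field $\mathbb{F}$ of characteristic not $2$. Let $\mathrm{ann}\,G=\{u\in U_G : uv=0 \text{ for all } v\in U_G\}$. Then $\mathrm{ann}\,G=\{u\in U_G: u^2=0\}$, and also $\mathrm{ann}\,G=\bigcap_{\mathfrak{e}\in EG}\ker\lambda_{\mathfrak{e}}$.
   Context: For a finite simple graph $G$ with vertex set $VG$ and edge set $EG$ (edge with endpoints $x,y$ written $[x,y]$, adjacency written $x\sim y$), the normal graph algebra $\mathcal{N}G$ is the $\mathbb{F}$-vector space $U_G\oplus\mathfrak{Z}_G$, where $U_G$ has basis $VG$ and $\mathfrak{Z}_G$ has basis $EG$, with commutative bilinear product determined on basis elements by: for distinct vertices $x,y$, $xy=[x,y]$ if $x\sim y$ and $xy=0$ otherwise; $x^2=\sum_{y\sim x}[x,y]$; all products involving an element of $\mathfrak{Z}_G$ are $0$. Equivalently, for $u=\sum_x\theta_x x$ and $v=\sum_x\eta_x x$, $uv=\sum_{[x,y]\in EG}(\theta_x+\theta_y)(\eta_x+\eta_y)[x,y]$. For an edge $\mathfrak{e}=[a,b]$, $\lambda_{\mathfrak{e}}$ is the linear functional on $U_G$ with $\lambda_{\mathfrak{e}}(a)=\lambda_{\mathfrak{e}}(b)=1$ and $\lambda_{\mathfrak{e}}(c)=0$ for all other vertices $c$. *)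

theory Defs
  imports Main
begin

text \<open>A finite simple graph: finite vertex set V and a symmetric irreflexive
adjacency relation E (only adjacencies between vertices of V matter).
Edges are represented as two-element vertex sets.\<close>

definition simple_graph :: "'v set \<Rightarrow> ('v \<Rightarrow> 'v \<Rightarrow> bool) \<Rightarrow> bool" where
  "simple_graph V E \<longleftrightarrow> finite V \<and> (\<forall>x y. E x y \<longrightarrow> E y x) \<and> (\<forall>x. \<not> E x x)"

definition graph_edges :: "'v set \<Rightarrow> ('v \<Rightarrow> 'v \<Rightarrow> bool) \<Rightarrow> 'v set set" where
  "graph_edges V E = {{x, y} | x y. x \<in> V \<and> y \<in> V \<and> E x y}"

text \<open>Elements of U_G: coefficient vectors over the basis V (zero outside V).
Elements of Z_G: coefficient vectors over the basis EG (functions on 2-sets,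
zero outside EG).\<close>

definition UG :: "'v set \<Rightarrow> ('v \<Rightarrow> 'a::field) set" where
  "UG V = {u. \<forall>x. x \<notin> V \<longrightarrow> u x = 0}"

text \<open>Product of basis vertices x, y, as a coefficient vector on edges:
for x \<noteq> y, xy = [x,y] if x ~ y and 0 otherwise; x^2 = sum of [x,y] over y ~ x.\<close>

definition basis_prod :: "'v set \<Rightarrow> ('v \<Rightarrow> 'v \<Rightarrow> bool) \<Rightarrow> 'v \<Rightarrow> 'v \<Rightarrow> 'v set \<Rightarrow> 'a::field" where
  "basis_prod V E x y e =
     (if x \<noteq> y then (if E x y \<and> e = {x, y} then 1 else 0)
      else (if e \<in> graph_edges V E \<and> x \<in> e then 1 else 0))"

definition nga_mult :: "'v set \<Rightarrow> ('v \<Rightarrow> 'v \<Rightarrow> bool) \<Rightarrow> ('v \<Rightarrow> 'a::field) \<Rightarrow> ('v \<Rightarrow> 'a) \<Rightarrow> 'v set \<Rightarrow> 'a" where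
  "nga_mult V E u v = (\<lambda>e. \<Sum>x\<in>V. \<Sum>y\<in>V. u x * v y * basis_prod V E x y e)"

text \<open>The functional lambda_e for an edge e = [a,b]: lambda_e(a) = lambda_e(b) = 1, others 0.\<close>

definition edge_functional :: "'v set \<Rightarrow> ('v \<Rightarrow> 'a::field) \<Rightarrow> 'a" where
  "edge_functional e u = (\<Sum>x\<in>e. u x)"

definition ann_G :: "'v set \<Rightarrow> ('v \<Rightarrow> 'v \<Rightarrow> bool) \<Rightarrow> ('v \<Rightarrow> 'a::field) set" where
  "ann_G V E = {u \<in> UG V. \<forall>v \<in> UG V. nga_mult V E u v = (\<lambda>_. 0)}"

end

theory Submission
  imports Defs
begin

lemma bp_edge:
  assumes sg: "simple_graph V E" and ab: "a \<in> V" "b \<in> V" "E a b" and xy: "x \<in> V" "y \<in> V"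
  shows "(basis_prod V E x y {a,b} :: 'a::field) = (if x \<in> {a,b} \<and> y \<in> {a,b} then 1 else 0)"
proof -
  have ne: "a \<noteq> b" using sg ab unfolding simple_graph_def by auto
  have sym: "E b a" using sg ab unfolding simple_graph_def by auto
  have ed: "{a,b} \<in> graph_edges V E" using ab unfolding graph_edges_def by blast
  show ?thesis
    unfolding basis_prod_def using ne sym ab ed
    by (auto simp: doubleton_eq_iff)
qed

lemma bp_nonedge:
  assumes "e \<notin> graph_edges V E" "x \<in> V" "y \<in> V"
  shows "(basis_prod V E x y e :: 'a::field) = 0"
  using assms unfolding basis_prod_def graph_edges_def by auto

lemma mult_nonedge:
  assumes "e \<notin> graph_edges V E"
  shows "nga_mult V E u v e = (0::'a::field)"
  unfolding nga_mult_def by (auto intro!: sum.neutral simp: bp_nonedge[OF assms])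

lemma mult_edge:
  assumes sg: "simple_graph V E" and ab: "a \<in> V" "b \<in> V" "E a b"
  shows "nga_mult V E u v {a,b} = ((u a + u b) * (v a + v b) :: 'a::field)"
proof -
  have fin: "finite V" using sg unfolding simple_graph_def by auto
  have ne: "a \<noteq> b" using sg ab unfolding simple_graph_def by auto
  have "nga_mult V E u v {a,b} = (\<Sum>x\<in>V. \<Sum>y\<in>V. if x \<in> {a,b} then (if y \<in> {a,b} then u x * v y else 0) else 0)"
    unfolding nga_mult_def
    by (intro sum.cong refl) (auto simp: bp_edge[OF sg ab])
  also have "\<dots> = (\<Sum>x\<in>V \<inter> {a,b}. \<Sum>y\<in>V \<inter> {a,b}. u x * v y)"
  proof -
    have "\<And>x. (\<Sum>y\<in>V. if x \<in> {a,b} then (if y \<in> {a,b} then u x * v y else 0) else 0)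
        = (if x \<in> {a,b} then (\<Sum>y\<in>V \<inter> {a,b}. u x * v y) else 0)"
      using sum.inter_restrict[OF fin, of "\<lambda>y. u _ * v y" "{a,b}"] by auto
    hence "(\<Sum>x\<in>V. \<Sum>y\<in>V. if x \<in> {a,b} then (if y \<in> {a,b} then u x * v y else 0) else 0)
        = (\<Sum>x\<in>V. if x \<in> {a,b} then (\<Sum>y\<in>V \<inter> {a,b}. u x * v y) else 0)"
      by (intro sum.cong) auto
    also have "\<dots> = (\<Sum>x\<in>V \<inter> {a,b}. \<Sum>y\<in>V \<inter> {a,b}. u x * v y)"
      by (rule sum.inter_restrict[OF fin, symmetric])
    finally show ?thesis .
  qed
  also have "V \<inter> {a,b} = {a,b}" using ab by auto
  also have "(\<Sum>x\<in>{a,b}. \<Sum>y\<in>{a,b}. u x * v y) = (u a + u b) * (v a + v b)"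
    using ne by (simp add: algebra_simps)
  finally show ?thesis .
qed

lemma ef_edge:
  assumes sg: "simple_graph V E" and ab: "a \<in> V" "b \<in> V" "E a b"
  shows "edge_functional {a,b} u = u a + u b"
proof -
  have ne: "a \<noteq> b" using sg ab unfolding simple_graph_def by auto
  thus ?thesis unfolding edge_functional_def by simp
qed

theorem proposition5p3:
  fixes V :: "'v set" and E :: "'v \<Rightarrow> 'v \<Rightarrow> bool"
  assumes "simple_graph V E"
    and "(2::'a::field) \<noteq> 0"
  shows "(ann_G V E :: ('v \<Rightarrow> 'a) set) = {u \<in> UG V. nga_mult V E u u = (\<lambda>_. 0)}
    \<and> (ann_G V E :: ('v \<Rightarrow> 'a) set) =
        {u \<in> UG V. \<forall>e \<in> graph_edges V E. edge_functional e u = 0}"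
proof -
  let ?A = "ann_G V E :: ('v \<Rightarrow> 'a) set"
  let ?S = "{u \<in> UG V. nga_mult V E u u = (\<lambda>_. 0)} :: ('v \<Rightarrow> 'a) set"
  let ?L = "{u \<in> UG V. \<forall>e \<in> graph_edges V E. edge_functional e u = 0} :: ('v \<Rightarrow> 'a) set"
  have 1: "?A \<subseteq> ?S" unfolding ann_G_def by auto
  have 2: "?S \<subseteq> ?L"
  proof
    fix u assume u: "u \<in> ?S"
    { fix e assume "e \<in> graph_edges V E"
      then obtain a b where e: "e = {a,b}" "a \<in> V" "b \<in> V" "E a b"
        unfolding graph_edges_def by auto
      have "nga_mult V E u u {a,b} = 0" using u by simp
      hence "(u a + u b) * (u a + u b) = 0" using mult_edge[OF assms(1) e(2-4), of u u] by simp
      hence "u a + u b = 0" by simp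
      hence "edge_functional e u = 0" using ef_edge[OF assms(1) e(2-4), of u] e(1) by simp }
    thus "u \<in> ?L" using u by auto
  qed
  have 3: "?L \<subseteq> ?A"
  proof
    fix u assume u: "u \<in> ?L"
    { fix v :: "'v \<Rightarrow> 'a"
      have "nga_mult V E u v = (\<lambda>_. 0)"
      proof
        fix e
        show "nga_mult V E u v e = 0"
        proof (cases "e \<in> graph_edges V E")
          case True
          then obtain a b where e: "e = {a,b}" "a \<in> V" "b \<in> V" "E a b"
            unfolding graph_edges_def by auto
          have "edge_functional e u = 0" using u True by auto
          thus ?thesis using mult_edge[OF assms(1) e(2-4), of u v] ef_edge[OF assms(1) e(2-4), of u] e(1) by simp
        qed (rule mult_nonedge)
      qed }
    thus "u \<in> ?A" using u unfolding ann_G_def by auto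
  qed
  show ?thesis using 1 2 3 by blast
qed

end
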